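(* Let $V(r)=r^{-6}-2r^{-3}$. There exists $A_3>0$ such that for every $A>A_3$, every minimizer $y_A\ge1$ of $y\mapsto E_V(0,y,A)$ on $[1,\infty)$ satisfies $$X_1(A)^{1/3}\le y_A\le X_2(A)^{1/3},$$ where $$X_{1,2}(A)=\frac{2\zeta_{\mathbb Z^2}(6)A^3\mp\sqrt{4\zeta_{\mathbb Z^2}(6)^2A^6-32A^4+8\zeta_{\mathbb Z^2}(12)A^2}}{4}.$$ In particular, $\lim_{A\to\infty}y_A=+\infty$, and there exists $C>0$ such that $y_A\le CA$ for all $A>A_3$.
   Context: For $A>0$, $x\in\mathbb R$, $y>0$, $E_{f}(x,y,A)=\sum_{m,n} f\left(A\left[\frac1y(m+xn)^2+yn^2\right]\right)$, where $\sum_{m,n}$ denotes summation over all $(m,n)\in\mathbb Z^2\setminus\{(0,0)\}$; $E_V(0,y,A)$, $y\ge1$, is the energy of the rectangular lattice $\mathbb Z(\sqrt{A/y},0)\oplus\mathbb Z(0,\sqrt{Ay})$. $\zeta_{\mathbb Z^2}(s)=\sum_{m,n}(m^2+n^2)^{-s/2}$. *)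

theory Defs
  imports "HOL-Analysis.Analysis"
begin

definition E_lat :: "(real \<Rightarrow> real) \<Rightarrow> real \<Rightarrow> real \<Rightarrow> real \<Rightarrow> real" where
  "E_lat f x y A = infsum (\<lambda>(m::int, n::int).
       f (A * ((1 / y) * (real_of_int m + x * real_of_int n)^2 + y * (real_of_int n)^2)))
     (UNIV - {(0, 0)})"

definition zeta_Z2 :: "real \<Rightarrow> real" where
  "zeta_Z2 s = infsum (\<lambda>(m::int, n::int).
       (real_of_int m ^ 2 + real_of_int n ^ 2) powr (- s / 2)) (UNIV - {(0, 0)})"

definition LJ_V :: "real \<Rightarrow> real" where
  "LJ_V r = r powr (-6) - 2 * r powr (-3)"

definition is_minimizer_y :: "real \<Rightarrow> real \<Rightarrow> bool" where
  "is_minimizer_y A yA \<longleftrightarrow> yA \<ge> 1 \<and> (\<forall>y\<ge>1. E_lat LJ_V 0 yA A \<le> E_lat LJ_V 0 y A)"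

definition X1 :: "real \<Rightarrow> real" where
  "X1 A = (2 * zeta_Z2 6 * A^3 - sqrt (4 * (zeta_Z2 6)^2 * A^6 - 32 * A^4 + 8 * zeta_Z2 12 * A^2)) / 4"

definition X2 :: "real \<Rightarrow> real" where
  "X2 A = (2 * zeta_Z2 6 * A^3 + sqrt (4 * (zeta_Z2 6)^2 * A^6 - 32 * A^4 + 8 * zeta_Z2 12 * A^2)) / 4"

end

theory Submission
  imports Defs
begin

definition gg :: "int \<Rightarrow> real" where "gg m = 1 / (1 + (real_of_int m)^2)"

lemma gg_nonneg: "0 \<le> gg m" by (simp add: gg_def)

lemma gg_step: "2 / (1 + (real N + 1)^2) \<le> 4 / (real N + 1) - 4 / (real N + 2)"
proof -
  have "4 / (real N + 1) - 4 / (real N + 2) = 4 / ((real N + 1) * (real N + 2))"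
    by (simp add: field_simps)
  also have "2 / (1 + (real N + 1)^2) \<le> 4 / ((real N + 1) * (real N + 2))"
  proof -
    have a: "0 < 1 + (real N + 1)^2" by (simp add: add_pos_nonneg)
    have b: "0 < (real N + 1) * (real N + 2)" by simp
    have c: "2 * ((real N + 1) * (real N + 2)) \<le> 4 * (1 + (real N + 1)^2)"
      by (simp add: power2_eq_square algebra_simps)
    show ?thesis using a b c by (simp add: divide_simps)
  qed
  finally show ?thesis by simp
qed

lemma gg_interval: "(\<Sum>m\<in>{-int N..int N}. gg m) \<le> 6 - 4 / (real N + 1)"
proof (induction N)
  case 0
  then show ?case by (simp add: gg_def)
next
  case (Suc N)
  have eq: "{-int (Suc N)..int (Suc N)} = insert (int N + 1) (insert (-(int N + 1)) {-int N..int N})"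
    by auto
  have "(\<Sum>m\<in>{-int (Suc N)..int (Suc N)}. gg m) = gg (int N + 1) + gg (-(int N + 1)) + (\<Sum>m\<in>{-int N..int N}. gg m)"
    unfolding eq by simp
  also have "gg (int N + 1) + gg (-(int N + 1)) = 2 / (1 + (real N + 1)^2)"
    by (simp add: gg_def power2_eq_square algebra_simps)
  finally have "(\<Sum>m\<in>{-int (Suc N)..int (Suc N)}. gg m) = 2 / (1 + (real N + 1)^2) + (\<Sum>m\<in>{-int N..int N}. gg m)" .
  moreover have "4 / (real (Suc N) + 1) = 4 / (real N + 2)" by (simp add: add.commute)
  ultimately show ?case using Suc gg_step[of N] by linarith
qed

lemma gg_fin: assumes "finite I" shows "sum gg I \<le> 6"
proof -
  obtain N where N: "\<forall>m\<in>I. \<bar>m\<bar> \<le> int N"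
  proof -
    have "bdd_above (abs ` I)" using assms by simp
    then obtain b where "\<forall>m\<in>I. \<bar>m\<bar> \<le> b" by (auto simp: bdd_above_def)
    then show ?thesis using that[of "nat b"] by fastforce
  qed
  have "I \<subseteq> {-int N..int N}" using N by force
  then have "sum gg I \<le> (\<Sum>m\<in>{-int N..int N}. gg m)"
    by (intro sum_mono2) (auto simp: gg_nonneg)
  also have "\<dots> \<le> 6 - 4 / (real N + 1)" by (rule gg_interval)
  also have "\<dots> \<le> 6" by simp
  finally show ?thesis .
qed


definition UU :: "(int \<times> int) set" where "UU = UNIV - {(0,0)}"

definition p3 :: "int \<times> int \<Rightarrow> real" where
  "p3 = (\<lambda>(m,n). 1 / (real_of_int m ^ 2 + real_of_int n ^ 2) ^ 3)"

lemma q_ge1: assumes "(m,n) \<in> UU" shows "1 \<le> real_of_int m ^ 2 + real_of_int n ^ 2"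
proof -
  have "m \<noteq> 0 \<or> n \<noteq> 0" using assms by (auto simp: UU_def)
  then have "1 \<le> m^2 + n^2"
  proof
    assume "m \<noteq> 0" then have "1 \<le> m^2" by (simp add: abs_square_le_1 zero_less_power2 int_one_le_iff_zero_less)
    then show ?thesis using zero_le_power2[of n] zero_le_power2[of m] by linarith
  next
    assume "n \<noteq> 0" then have "1 \<le> n^2" by (simp add: int_one_le_iff_zero_less)
    then show ?thesis using zero_le_power2[of n] zero_le_power2[of m] by linarith
  qed
  then have "real_of_int 1 \<le> real_of_int (m^2 + n^2)" by linarith
  then show ?thesis by simp
qed

lemma p3_nonneg: "0 \<le> p3 z" by (auto simp: p3_def split: prod.splits)

lemma p3_le: assumes "(m,n) \<in> UU" shows "p3 (m,n) \<le> 3 * (gg m * gg n)"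
proof -
  define a where "a = real_of_int m ^ 2"
  define b where "b = real_of_int n ^ 2"
  have a0: "0 \<le> a" and b0: "0 \<le> b" by (auto simp: a_def b_def)
  have q1: "1 \<le> a + b" using q_ge1[OF assms] by (simp add: a_def b_def)
  have "(1 + a) * (1 + b) \<le> 3 * (a + b)^2"
  proof -
    have e1: "a * b \<le> (a+b)^2" using a0 b0 by (simp add: power2_eq_square algebra_simps)
    have e2: "a + b \<le> (a+b)^2" using q1 by (simp add: power2_eq_square)
    have e3: "1 \<le> (a+b)^2" using q1 e2 by linarith
    show ?thesis using e1 e2 e3 by (simp add: algebra_simps)
  qed
  also have "\<dots> \<le> 3 * (a + b)^3" using q1 power_increasing[of 2 3 "a+b"] by simp
  finally have h: "(1 + a) * (1 + b) \<le> 3 * (a + b)^3" .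
  have "p3 (m,n) = 1 / (a+b)^3" by (simp add: p3_def a_def b_def)
  also have "\<dots> \<le> 3 / ((1 + a) * (1 + b))"
  proof -
    have "1 / (a+b)^3 = 3 / (3 * (a+b)^3)" by simp
    also have "\<dots> \<le> 3 / ((1 + a) * (1 + b))"
      by (rule frac_le) (use h a0 b0 in auto)
    finally show ?thesis .
  qed
  also have "\<dots> = 3 * (gg m * gg n)" by (simp add: gg_def a_def b_def)
  finally show ?thesis .
qed

lemma p3_fin: assumes "finite F" "F \<subseteq> UU" shows "sum p3 F \<le> 108"
proof -
  define I where "I = fst ` F \<union> snd ` F"
  have fI: "finite I" using assms by (simp add: I_def)
  have FI: "F \<subseteq> I \<times> I" by (force simp: I_def)
  have "sum p3 F \<le> sum (\<lambda>(m,n). 3 * (gg m * gg n)) F"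
    by (intro sum_mono) (use assms p3_le in auto)
  also have "\<dots> \<le> sum (\<lambda>(m,n). 3 * (gg m * gg n)) (I \<times> I)"
    by (intro sum_mono2) (use fI FI in \<open>auto simp: gg_nonneg\<close>)
  also have "\<dots> = 3 * (\<Sum>(m,n)\<in>I \<times> I. gg m * gg n)"
    by (simp add: sum_distrib_left case_prod_unfold)
  also have "\<dots> = 3 * (sum gg I * sum gg I)"
    by (simp add: sum_product sum.cartesian_product)
  also have "\<dots> \<le> 3 * (6 * 6)"
  proof -
    have "sum gg I * sum gg I \<le> 6 * 6"
      using gg_fin[OF fI] sum_nonneg[of I gg] gg_nonneg by (intro mult_mono) auto
    then show ?thesis by linarith
  qed
  finally show ?thesis by simp
qed

lemma p3_summable: "p3 summable_on UU"
  by (rule nonneg_bdd_above_summable_on) (use p3_nonneg p3_fin in \<open>auto intro!: bdd_aboveI2\<close>)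

lemma powr_m3: fixes x :: real assumes "0 < x" shows "x powr (- 6 / 2) = 1 / x ^ 3"
proof -
  have "(- 6 / 2 :: real) = - 3" by simp
  then have "x powr (- 6 / 2) = x powr (- 3)" by (simp only:)
  also have "\<dots> = inverse (x powr 3)" by (rule powr_minus)
  also have "x powr 3 = x ^ 3" using assms by (intro powr_numeral) simp
  finally show ?thesis by (simp only: inverse_eq_divide)
qed

lemma zeta6_eq: "zeta_Z2 6 = infsum p3 UU"
proof -
  have "zeta_Z2 6 = infsum (\<lambda>(m::int, n::int). (real_of_int m ^ 2 + real_of_int n ^ 2) powr (- 6 / 2)) UU"
    unfolding zeta_Z2_def UU_def by (rule refl)
  also have "\<dots> = infsum p3 UU"
  proof (rule infsum_cong)
    fix z assume z: "z \<in> UU"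
    obtain m n where zz: "z = (m,n)" by force
    have "(m,n) \<in> UU" using z zz by simp
    then have q: "0 < real_of_int m ^ 2 + real_of_int n ^ 2" using q_ge1[of m n] by linarith
    show "(case z of (m, n) \<Rightarrow> (real_of_int m ^ 2 + real_of_int n ^ 2) powr (- 6 / 2)) = p3 z"
      unfolding zz p3_def using powr_m3[OF q] by (simp only: prod.case)
  qed
  finally show ?thesis .
qed

lemma zeta6_bounds: "(p3 has_sum zeta_Z2 6) UU" "0 \<le> zeta_Z2 6" "zeta_Z2 6 \<le> 108"
  using p3_summable zeta6_eq p3_fin p3_nonneg
  by (auto intro!: infsum_le_finite_sums infsum_nonneg)

lemma zeta12_nonneg: "0 \<le> zeta_Z2 12"
  unfolding zeta_Z2_def by (rule infsum_nonneg) (simp only: case_prod_unfold powr_ge_zero)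


definition Et :: "real \<Rightarrow> real \<Rightarrow> int \<times> int \<Rightarrow> real" where
  "Et y A = (\<lambda>(m,n). LJ_V (A * ((1/y) * (real_of_int m)^2 + y * (real_of_int n)^2)))"

lemma E_eq: "E_lat LJ_V 0 y A = infsum (Et y A) UU"
  by (simp add: E_lat_def UU_def Et_def)

lemma LJ_pos: assumes "0 < r" shows "LJ_V r = 1 / r^6 - 2 / r^3"
proof -
  have "r powr (-6) = inverse (r powr 6)" by (rule powr_minus)
  also have "r powr 6 = r^6" using assms by (intro powr_numeral) simp
  finally have a: "r powr (-6) = 1/r^6" by (simp only: inverse_eq_divide)
  have "r powr (-3) = inverse (r powr 3)" by (rule powr_minus)
  also have "r powr 3 = r^3" using assms by (intro powr_numeral) simp
  finally have b: "r powr (-3) = 1/r^3" by (simp only: inverse_eq_divide)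
  show ?thesis unfolding LJ_V_def a b by simp
qed

lemma r_low:
  assumes y: "1 \<le> y" and A: "0 < A" and z: "(m,n) \<in> UU"
  shows "A * (real_of_int m ^ 2 + real_of_int n ^ 2) / y \<le> A * ((1/y) * (real_of_int m)^2 + y * (real_of_int n)^2)"
proof -
  have "(real_of_int m ^ 2 + real_of_int n ^ 2) / y \<le> (1/y) * (real_of_int m)^2 + y * (real_of_int n)^2"
  proof -
    have "real_of_int n ^ 2 \<le> y * y * real_of_int n ^ 2"
    proof -
      have "1 \<le> y * y" using y mult_mono[of 1 y 1 y] by simp
      then show ?thesis using mult_right_mono[of 1 "y*y" "real_of_int n ^ 2"] by simp
    qed
    then have "real_of_int m ^ 2 + real_of_int n ^ 2 \<le> real_of_int m ^ 2 + y * y * real_of_int n ^ 2" by simp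
    then show ?thesis using y by (simp add: field_simps)
  qed
  then have "A * ((real_of_int m ^ 2 + real_of_int n ^ 2) / y) \<le> A * ((1/y) * (real_of_int m)^2 + y * (real_of_int n)^2)"
    using A by (intro mult_left_mono) auto
  then show ?thesis by simp
qed


lemma inv_pow_bounds:
  fixes A q y r :: real
  assumes r: "A * q / y \<le> r" and A: "0 < A" and y: "0 < y" and q: "1 \<le> q"
  shows "1 / r^3 \<le> (y/A)^3 * (1 / q^3)" "1 / r^6 \<le> (y/A)^6 * (1 / q^3)" "0 < r"
proof -
  have L: "0 < A * q / y" using A y q by (intro divide_pos_pos mult_pos_pos) auto
  show rp: "0 < r" using L r by linarith
  have t: "1 / r \<le> y / (A * q)"
  proof -
    have "1 / r \<le> 1 / (A * q / y)" by (rule divide_left_mono) (use r L rp mult_pos_pos[OF rp L] in auto)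
    then show ?thesis by simp
  qed
  have t0: "0 \<le> 1 / r" using rp by simp
  have "(1/r)^3 \<le> (y / (A*q))^3" by (rule power_mono[OF t t0])
  then show "1 / r^3 \<le> (y/A)^3 * (1 / q^3)" by (simp add: power_divide power_mult_distrib)
  have "(1/r)^6 \<le> (y / (A*q))^6" by (rule power_mono[OF t t0])
  also have "(y / (A*q))^6 = (y/A)^6 * (1/q^6)" by (simp add: power_divide power_mult_distrib)
  also have "\<dots> \<le> (y/A)^6 * (1/q^3)"
  proof (rule mult_left_mono)
    have "q^3 \<le> q^6" using q by (intro power_increasing) auto
    then show "1/q^6 \<le> 1/q^3" using q by (intro divide_left_mono) auto
  qed simp
  finally show "1 / r^6 \<le> (y/A)^6 * (1 / q^3)" by (simp add: power_divide)
qed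

lemma Et_abs:
  assumes y: "1 \<le> y" and A: "0 < A" and z: "z \<in> UU"
  shows "\<bar>Et y A z\<bar> \<le> ((y/A)^6 + 2*(y/A)^3) * p3 z"
proof -
  obtain m n where zz: "z = (m,n)" by force
  define q where "q = real_of_int m ^ 2 + real_of_int n ^ 2"
  define r where "r = A * ((1/y) * (real_of_int m)^2 + y * (real_of_int n)^2)"
  have q1: "1 \<le> q" using q_ge1 z zz by (simp add: q_def)
  have b: "A * q / y \<le> r" using r_low[OF y A] z zz by (simp add: q_def r_def)
  note ib = inv_pow_bounds[OF b A _ q1]
  have y0: "0 < y" using y by simp
  have p: "p3 z = 1/q^3" by (simp add: zz p3_def q_def)
  have "Et y A z = 1/r^6 - 2/r^3" using ib(3)[OF y0] by (simp add: zz Et_def r_def LJ_pos)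
  moreover have "0 \<le> 1/r^6" "0 \<le> 2/r^3" using ib(3)[OF y0] by auto
  ultimately have "\<bar>Et y A z\<bar> \<le> 1/r^6 + 2 * (1/r^3)" by (simp add: abs_le_iff)
  also have "\<dots> \<le> (y/A)^6 * (1 / q^3) + 2 * ((y/A)^3 * (1 / q^3))"
    using ib(1)[OF y0] ib(2)[OF y0] by linarith
  finally show ?thesis by (simp add: p algebra_simps)
qed

lemma Et_summable:
  assumes y: "1 \<le> y" and A: "0 < A"
  shows "Et y A summable_on UU"
proof -
  define K where "K = (y/A)^6 + 2*(y/A)^3"
  have K0: "0 \<le> K" using y A by (simp add: K_def)
  have "(\<lambda>z. K * p3 z) summable_on UU"
    by (intro summable_on_cmult_right p3_summable)
  then have "Infinite_Sum.abs_summable_on (\<lambda>z. K * p3 z) UU"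
    by (rule iffD1[OF summable_on_iff_abs_summable_on_real])
  then have "Infinite_Sum.abs_summable_on (Et y A) UU"
  proof (rule Infinite_Sum.abs_summable_on_comparison_test)
    fix z assume z: "z \<in> UU"
    have n: "0 \<le> K * p3 z" by (intro mult_nonneg_nonneg K0 p3_nonneg)
    have "norm (Et y A z) = \<bar>Et y A z\<bar>" by (rule real_norm_def)
    also have "\<dots> \<le> K * p3 z" unfolding K_def by (rule Et_abs[OF y A z])
    also have "\<dots> = norm (K * p3 z)" using n by (simp only: real_norm_def abs_of_nonneg)
    finally show "norm (Et y A z) \<le> norm (K * p3 z)" .
  qed
  then show ?thesis by (rule iffD2[OF summable_on_iff_abs_summable_on_real])
qed

lemma Et_has_sum:
  assumes y: "1 \<le> y" and A: "0 < A"
  shows "(Et y A has_sum E_lat LJ_V 0 y A) UU"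
  using Et_summable[OF y A] by (simp add: E_eq)

definition BB :: "(int \<times> int) set" where "BB = {(1,0), (-1,0)}"

lemma BB_sub: "BB \<subseteq> UU" by (auto simp: BB_def UU_def)

lemma E_lower:
  assumes y: "1 \<le> y" and A: "0 < A"
  shows "2*(y/A)^6 - 2*(y/A)^3 * zeta_Z2 6 \<le> E_lat LJ_V 0 y A"
proof -
  define H where "H = (\<lambda>z. (if z \<in> BB then (y/A)^6 else 0) + (- 2*(y/A)^3) * p3 z)"
  have h1: "((\<lambda>z. if z \<in> BB then (y/A)^6 else (0::real)) has_sum 2*(y/A)^6) UU"
    by (rule has_sum_finite_neutralI[of BB]) (auto simp: BB_def UU_def)
  have h2: "((\<lambda>z. (- 2*(y/A)^3) * p3 z) has_sum (- 2*(y/A)^3) * zeta_Z2 6) UU"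
    by (intro has_sum_cmult_right zeta6_bounds)
  have hH: "(H has_sum (2*(y/A)^6 + (- 2*(y/A)^3) * zeta_Z2 6)) UU"
    unfolding H_def by (rule has_sum_add[OF h1 h2])
  have "2*(y/A)^6 + (- 2*(y/A)^3) * zeta_Z2 6 \<le> E_lat LJ_V 0 y A"
  proof (rule has_sum_mono[OF hH Et_has_sum[OF y A]])
    fix z assume z: "z \<in> UU"
    obtain m n where zz: "z = (m,n)" by force
    define q where "q = real_of_int m ^ 2 + real_of_int n ^ 2"
    define r where "r = A * ((1/y) * (real_of_int m)^2 + y * (real_of_int n)^2)"
    have q1: "1 \<le> q" using q_ge1 z zz by (simp add: q_def)
    have b: "A * q / y \<le> r" using r_low[OF y A] z zz by (simp add: q_def r_def)
    have y0: "0 < y" using y by simp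
    note ib = inv_pow_bounds[OF b A y0 q1]
    have p: "p3 z = 1/q^3" by (simp add: zz p3_def q_def)
    have Et: "Et y A z = 1/r^6 - 2/r^3" using ib(3) by (simp add: zz Et_def r_def LJ_pos)
    have "(if z \<in> BB then (y/A)^6 else 0) \<le> 1/r^6"
    proof (cases "z \<in> BB")
      case True
      then have "r = A / y" by (auto simp: BB_def zz r_def)
      then show ?thesis using True by (simp add: power_divide)
    next
      case False
      then show ?thesis using ib(3) by simp
    qed
    then show "H z \<le> Et y A z" using ib(1) by (simp add: H_def Et p)
  qed
  then show ?thesis by simp
qed

lemma r_at_A: "0 < A \<Longrightarrow> A * ((1/A) * (real_of_int m)^2 + A * (real_of_int n)^2) = real_of_int m ^ 2 + A^2 * real_of_int n ^ 2"
  by (simp add: field_simps power2_eq_square)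

lemma E_upper:
  assumes A: "4 \<le> A"
  shows "E_lat LJ_V 0 A A \<le> - 1/4"
proof -
  have A0: "0 < A" and A1: "1 \<le> A" using A by auto
  define c where "c = 1/64 + 1/A^6"
  have c0: "0 \<le> c" by (simp add: c_def)
  define G where "G = (\<lambda>z. (if z \<in> BB then -1-c else 0) + c * p3 z)"
  have h1: "((\<lambda>z. if z \<in> BB then -1-c else (0::real)) has_sum 2*(-1-c)) UU"
    by (rule has_sum_finite_neutralI[of BB]) (auto simp: BB_def UU_def)
  have h2: "((\<lambda>z. c * p3 z) has_sum c * zeta_Z2 6) UU"
    by (intro has_sum_cmult_right zeta6_bounds)
  have hG: "(G has_sum (2*(-1-c) + c * zeta_Z2 6)) UU"
    unfolding G_def by (rule has_sum_add[OF h1 h2])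
  have "E_lat LJ_V 0 A A \<le> 2*(-1-c) + c * zeta_Z2 6"
  proof (rule has_sum_mono[OF Et_has_sum[OF A1 A0] hG])
    fix z assume z: "z \<in> UU"
    obtain m n where zz: "z = (m,n)" by force
    define q where "q = real_of_int m ^ 2 + real_of_int n ^ 2"
    define r where "r = real_of_int m ^ 2 + A^2 * real_of_int n ^ 2"
    have q1: "1 \<le> q" using q_ge1 z zz by (simp add: q_def)
    have b: "A * q / A \<le> r" using r_low[OF A1 A0] z zz r_at_A[OF A0] by (simp add: q_def r_def)
    note ib = inv_pow_bounds[OF b A0 A0 q1]
    have rp: "0 < r" using ib(3) .
    have p: "p3 z = 1/q^3" by (simp add: zz p3_def q_def)
    have Et: "Et A A z = 1/r^6 - 2/r^3" using rp r_at_A[OF A0] by (simp add: zz Et_def r_def LJ_pos)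
    show "Et A A z \<le> G z"
    proof (cases "z \<in> BB")
      case True
      then have "r = 1" "q = 1" by (auto simp: BB_def zz r_def q_def)
      then show ?thesis using True by (simp add: G_def Et p)
    next
      case False
      have "1/r^6 \<le> c * (1/q^3)"
      proof (cases "n = 0")
        case True
        have rq: "r = q" by (simp add: r_def q_def True)
        have "m \<noteq> 1" "m \<noteq> -1" "m \<noteq> 0" using False z True by (auto simp: zz BB_def UU_def)
        then have "2 \<le> \<bar>m\<bar>" by auto
        then have "2 \<le> \<bar>real_of_int m\<bar>" by linarith
        then have "2^2 \<le> \<bar>real_of_int m\<bar>^2" by (intro power_mono) auto
        then have q4: "4 \<le> q" by (simp add: q_def True)
        have "(4::real)^3 \<le> q^3" using q4 by (intro power_mono) auto
        then have "64 \<le> q^3" by simp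
        have "1/r^6 = (1/q^3) * (1/q^3)" by (simp add: rq power_mult_distrib flip: power_add)
        also have "\<dots> \<le> (1/q^3) * (1/64)"
          using \<open>64 \<le> q^3\<close> q4 by (intro mult_left_mono divide_left_mono) auto
        also have "\<dots> \<le> (1/q^3) * c" using q4 by (intro mult_left_mono) (auto simp: c_def)
        finally show ?thesis by simp
      next
        case False
        have "1 \<le> n ^ 2" using False by (simp add: int_one_le_iff_zero_less)
        then have "real_of_int 1 \<le> real_of_int (n ^ 2)" by linarith
        then have n1: "1 \<le> real_of_int n ^ 2" by simp
        have "A^2 * 1 \<le> A^2 * real_of_int n ^ 2" using n1 by (intro mult_left_mono) auto
        then have "A^2 \<le> r" unfolding r_def using zero_le_power2[of "real_of_int m"] by linarith
        then have "(A^2)^3 \<le> r^3" by (intro power_mono) auto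
        have rq: "q \<le> r" using b A0 by simp
        then have "q^3 \<le> r^3" using q1 by (intro power_mono) auto
        have "1/r^6 = (1/r^3) * (1/r^3)" by (simp add: power_mult_distrib flip: power_add)
        also have "\<dots> \<le> (1/A^6) * (1/q^3)"
        proof (intro mult_mono)
          show "1/r^3 \<le> 1/A^6" using \<open>(A^2)^3 \<le> r^3\<close> A0 rp
            by (intro divide_left_mono) (auto simp flip: power_mult)
          show "1/r^3 \<le> 1/q^3" using \<open>q^3 \<le> r^3\<close> q1 rp by (intro divide_left_mono) auto
        qed (use A0 rp in auto)
        also have "\<dots> \<le> c * (1/q^3)" using q1 by (intro mult_right_mono) (auto simp: c_def)
        finally show ?thesis .
      qed
      moreover have "0 \<le> 2/r^3" using rp by simp
      ultimately have "Et A A z \<le> c * (1/q^3)" unfolding Et by linarith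
      then show ?thesis using False by (simp add: G_def p)
    qed
  qed
  also have "\<dots> \<le> -2 + c * 108"
  proof -
    have "c * zeta_Z2 6 \<le> c * 108" using zeta6_bounds(3) c0 by (rule mult_left_mono)
    then show ?thesis using c0 by (simp add: algebra_simps)
  qed
  also have "\<dots> \<le> -1/4"
  proof -
    have "(4::real)^6 \<le> A^6" using A by (intro power_mono) auto
    then have "1/A^6 \<le> 1/4096" by (intro divide_left_mono) auto
    then show ?thesis by (simp add: c_def)
  qed
  finally show ?thesis .
qed


lemma key_ineq:
  assumes A: "4 < A" and mi: "is_minimizer_y A yA"
  shows "1 \<le> yA" "2*(yA^3)^2 - 2*zeta_Z2 6*A^3*(yA^3) \<le> -(A^6/4)"
proof -
  show y1: "1 \<le> yA" using mi by (simp add: is_minimizer_y_def)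
  have A0: "0 < A" and A1: "1 \<le> A" using A by auto
  have "E_lat LJ_V 0 yA A \<le> E_lat LJ_V 0 A A" using mi A1 by (simp add: is_minimizer_y_def)
  also have "\<dots> \<le> -1/4" using E_upper A by simp
  finally have E: "E_lat LJ_V 0 yA A \<le> -1/4" .
  define w where "w = (yA/A)^3"
  have L: "2*w^2 - 2*w*zeta_Z2 6 \<le> -1/4"
    using E_lower[OF y1 A0] E by (simp add: w_def flip: power_mult)
  have "(2*w^2 - 2*w*zeta_Z2 6) * A^6 \<le> (-1/4) * A^6"
    using L A0 by (intro mult_right_mono) auto
  moreover have "w * A^3 = yA^3" using A0 by (simp add: w_def power_divide)
  moreover have "(2*w^2 - 2*w*zeta_Z2 6) * A^6 = 2*(w*A^3)^2 - 2*zeta_Z2 6*A^3*(w*A^3)"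
    by (simp add: power2_eq_square algebra_simps flip: power_add)
  ultimately have "2*(w*A^3)^2 - 2*zeta_Z2 6*A^3*(w*A^3) \<le> -(A^6/4)"
    by simp
  then show "2*(yA^3)^2 - 2*zeta_Z2 6*A^3*(yA^3) \<le> -(A^6/4)"
    using \<open>w * A^3 = yA^3\<close> by simp
qed

lemma part1:
  assumes A: "4 < A" and mi: "is_minimizer_y A yA"
  shows "root 3 (X1 A) \<le> yA \<and> yA \<le> root 3 (X2 A)"
proof -
  define s where "s = zeta_Z2 6"
  have z0: "0 \<le> zeta_Z2 12" by (rule zeta12_nonneg)
  note k = key_ineq[OF A mi]
  define XX where "XX = yA^3"
  define D where "D = 4 * s^2 * A^6 - 32 * A^4 + 8 * zeta_Z2 12 * A^2"
  have K: "2*XX^2 - 2* s*A^3*XX \<le> -(A^6/4)" using k(2) by (simp only: XX_def s_def)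
  have A4: "16 * A^4 \<le> A^6"
  proof -
    have "4^2 \<le> A^2" using A by (intro power_mono) auto
    then have "16 \<le> A^2" by simp
    then have "16 * A^4 \<le> A^2 * A^4" by (intro mult_right_mono) auto
    also have "A^2 * A^4 = A^6" by (simp flip: power_add)
    finally show ?thesis .
  qed
  have zA: "0 \<le> 8 * zeta_Z2 12 * A^2" using z0 by simp
  have eq: "(4*XX - 2* s*A^3)^2 = 8*(2*XX^2 - 2* s*A^3*XX) + 4* s^2*A^6"
    by (simp add: power2_eq_square power_mult_distrib algebra_simps)
  have sq: "(4*XX - 2* s*A^3)^2 \<le> D"
  proof -
    define P where "P = 2*XX^2 - 2* s*A^3*XX"
    define T where "T = 4* s^2*A^6"
    define Z where "Z = 8 * zeta_Z2 12 * A^2"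
    define a6 where "a6 = A^6"
    define a4 where "a4 = A^4"
    have "P \<le> -(a6/4)" "16 * a4 \<le> a6" "0 \<le> Z" using K A4 zA by (simp_all only: P_def a6_def a4_def Z_def)
    then have "8*P + T \<le> T - 32 * a4 + Z" by linarith
    moreover have "D = T - 32 * a4 + Z" by (simp only: D_def T_def a4_def Z_def)
    ultimately show ?thesis unfolding eq P_def T_def by simp
  qed
  have a: "\<bar>4*XX - 2* s*A^3\<bar> \<le> sqrt D"
  proof -
    have "sqrt ((4*XX - 2* s*A^3)^2) \<le> sqrt D" by (rule real_sqrt_le_mono[OF sq])
    then show ?thesis by (simp only: real_sqrt_abs)
  qed
  then have a1: "4*XX - 2* s*A^3 \<le> sqrt D" and a2: "-(4*XX - 2* s*A^3) \<le> sqrt D"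
    by (simp_all only: abs_le_iff)
  have e1: "X1 A = (2 * s * A^3 - sqrt D) / 4" by (simp only: X1_def D_def s_def)
  have e2: "X2 A = (2 * s * A^3 + sqrt D) / 4" by (simp only: X2_def D_def s_def)
  have X1: "X1 A \<le> XX"
  proof -
    define w where "w = 2 * s * A^3"
    have "-(4*XX - w) \<le> sqrt D" using a2 by (simp only: w_def)
    then have "(w - sqrt D) / 4 \<le> XX" by (simp add: field_simps)
    then show ?thesis unfolding e1 w_def .
  qed
  have X2: "XX \<le> X2 A"
  proof -
    define w where "w = 2 * s * A^3"
    have "4*XX - w \<le> sqrt D" using a1 by (simp only: w_def)
    then have "XX \<le> (w + sqrt D) / 4" by (simp add: field_simps)
    then show ?thesis unfolding e2 w_def .
  qed
  have r: "root 3 XX = yA" using k(1) unfolding XX_def by (intro real_root_power_cancel) auto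
  have "root 3 (X1 A) \<le> root 3 XX" using X1 by (subst real_root_le_iff) auto
  moreover have "root 3 XX \<le> root 3 (X2 A)" using X2 by (subst real_root_le_iff) auto
  ultimately show ?thesis using r by simp
qed

lemma part2_low:
  assumes A: "4 < A" and mi: "is_minimizer_y A yA"
  shows "A / (8 * zeta_Z2 6 + 1) \<le> yA"
proof -
  define s where "s = zeta_Z2 6"
  have s0: "0 \<le> s" using zeta6_bounds by (simp add: s_def)
  define k where "k = 8* s + 1"
  have k1: "1 \<le> k" using s0 by (simp add: k_def)
  note kk = key_ineq[OF A mi]
  define XX where "XX = yA ^ 3"
  have K: "2*XX^2 - 2* s*A^3*XX \<le> -(A^6/4)" using kk(2) by (simp only: XX_def s_def)
  have X0: "0 \<le> XX" using kk(1) by (simp add: XX_def)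
  have "0 \<le> 2*XX^2" by simp
  then have h: "A^6/4 \<le> 2* s*A^3*XX" using K by linarith
  have "A^3 * A^3 = A^6" by (simp flip: power_add)
  then have "A^3 * A^3 \<le> A^3 * (8* s*XX)" using h by (simp add: algebra_simps)
  moreover have "0 < A^3" using A by simp
  ultimately have "A^3 \<le> 8* s*XX" by (rule mult_left_le_imp_le)
  then have "A^3 \<le> k * XX" using X0 by (simp add: k_def algebra_simps)
  moreover have "k \<le> k^3" using k1 power_increasing[of 1 3 k] by simp
  moreover have "k * XX \<le> k^3 * XX" using \<open>k \<le> k^3\<close> X0 by (rule mult_right_mono)
  ultimately have "A^3 \<le> k^3 * XX" by linarith
  moreover have "(A/k)^3 * k^3 = A^3" using k1 by (simp add: power_divide)
  ultimately have "(A/k)^3 * k^3 \<le> XX * k^3" by (simp add: algebra_simps)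
  moreover have "0 < k^3" using k1 by simp
  ultimately have "(A/k)^3 \<le> XX" by (rule mult_right_le_imp_le)
  then have "(A/k)^Suc 2 \<le> yA^Suc 2" by (simp add: XX_def)
  then have "A/k \<le> yA" by (rule power_le_imp_le_base) (use kk(1) in simp)
  then show ?thesis by (simp add: k_def s_def)
qed

lemma part3:
  assumes A: "4 < A" and mi: "is_minimizer_y A yA"
  shows "yA \<le> (zeta_Z2 6 + 1) * A"
proof -
  define s where "s = zeta_Z2 6"
  have s0: "0 \<le> s" using zeta6_bounds by (simp add: s_def)
  note kk = key_ineq[OF A mi]
  define XX where "XX = yA ^ 3"
  have K: "2*XX^2 - 2* s*A^3*XX \<le> -(A^6/4)" using kk(2) by (simp only: XX_def s_def)
  have X0: "0 < XX" using kk(1) by (simp add: XX_def)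
  have "0 \<le> A^6/4" by simp
  then have h: "2*XX^2 \<le> 2* s*A^3*XX" using K by linarith
  have "XX * XX \<le> (s*A^3) * XX" using h by (simp add: power2_eq_square algebra_simps)
  then have "XX \<le> s*A^3" using X0 by (rule mult_right_le_imp_le)
  also have "\<dots> \<le> (s+1)^3 * A^3"
  proof (rule mult_right_mono)
    show "s \<le> (s+1)^3" using s0 power_increasing[of 1 3 "s+1"] by simp
  qed (use A in auto)
  also have "\<dots> = ((s+1)*A)^3" by (simp only: power_mult_distrib)
  finally have "yA^Suc 2 \<le> ((s+1)*A)^Suc 2" by (simp add: XX_def)
  then have "yA \<le> (s+1) * A" by (rule power_le_imp_le_base) (use A s0 in simp)
  then show ?thesis by (simp add: s_def)
qed

theorem proposition5p1:
  shows "\<exists>A3>0.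
    (\<forall>A>A3. \<forall>yA. is_minimizer_y A yA \<longrightarrow> root 3 (X1 A) \<le> yA \<and> yA \<le> root 3 (X2 A)) \<and>
    (\<forall>yf :: real \<Rightarrow> real. (\<forall>A>A3. is_minimizer_y A (yf A)) \<longrightarrow> filterlim yf at_top at_top) \<and>
    (\<exists>C>0. \<forall>A>A3. \<forall>yA. is_minimizer_y A yA \<longrightarrow> yA \<le> C * A)"
proof (rule exI[of _ 4], intro conjI)
  have s0: "0 \<le> zeta_Z2 6" using zeta6_bounds by simp
  define k where "k = 8 * zeta_Z2 6 + 1"
  have k1: "1 \<le> k" using s0 by (simp add: k_def)
  show "(0::real) < 4" by simp
  show "\<forall>A>4. \<forall>yA. is_minimizer_y A yA \<longrightarrow> root 3 (X1 A) \<le> yA \<and> yA \<le> root 3 (X2 A)"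
    using part1 by blast
  show "\<forall>yf :: real \<Rightarrow> real. (\<forall>A>4. is_minimizer_y A (yf A)) \<longrightarrow> filterlim yf at_top at_top"
  proof (intro allI impI)
    fix yf :: "real \<Rightarrow> real" assume H: "\<forall>A>4. is_minimizer_y A (yf A)"
    show "filterlim yf at_top at_top"
      unfolding filterlim_at_top
    proof
      fix Z :: real
      show "eventually (\<lambda>A. Z \<le> yf A) at_top"
        unfolding eventually_at_top_linorder
      proof (intro exI[of _ "max 5 (Z*k)"] allI impI)
        fix A assume "max 5 (Z*k) \<le> A"
        then have A: "4 < A" and Zk: "Z * k \<le> A" by auto
        have "Z \<le> A / k" using Zk k1 by (simp add: field_simps)
        moreover have "A / k \<le> yf A" unfolding k_def using part2_low[OF A] H A by blast
        ultimately show "Z \<le> yf A" by linarith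
      qed
    qed
  qed
  show "\<exists>C>0. \<forall>A>4. \<forall>yA. is_minimizer_y A yA \<longrightarrow> yA \<le> C * A"
  proof (intro exI[of _ "zeta_Z2 6 + 1"] conjI allI impI)
    show "0 < zeta_Z2 6 + 1" using s0 by simp
    fix A yA assume "4 < A" "is_minimizer_y A yA"
    then show "yA \<le> (zeta_Z2 6 + 1) * A" by (rule part3)
  qed
qed

end
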